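(* Let $\lambda\in(1,2)$. The map sending a sequence $(a_j)_{j=1}^\infty\in\{0,1\}^{\mathbb{N}}$ to the $S$-gap shift $X(S)$ with $S=\{j-1: a_j=1\}$ is a bijection between the set of sequences $(a_j)_{j=1}^\infty\in\{0,1\}^{\mathbb{N}}$ satisfying $\sum_{j=1}^\infty a_j\lambda^{-j}=1$ and the set of $S$-gap shifts with entropy $\log\lambda$.
   Context: For a nonempty set $S\subseteq\{0,1,2,\dots\}$, the $S$-gap shift $X(S)\subseteq\{0,1\}^{\mathbb{Z}}$ is the set of bi-infinite binary sequences in which the number of consecutive zeros between ones is always an element of $S$ (points have the form $\cdots10^{n_{-1}}10^{n_0}10^{n_1}\cdots$ with $n_j\in S$). The entropy of a shift $X$ is $h(X)=\lim_n\frac1n\log|\mathcal{B}_n(X)|$, where $\mathcal{B}_n(X)$ is the set of words of length $n$ occurring in points of $X$ and $\log$ is to base $2$. *)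

theory Defs
  imports Complex_Main
begin

text \<open>Points of the full shift on {0,1}: bi-infinite sequences, True = 1, False = 0.\<close>

text \<open>Points of the explicit form ...1 0^{n_{-1}} 1 0^{n_0} 1 0^{n_1} ... with all n_j in S:
  ones occur unboundedly in both directions and every gap between consecutive ones
  has length in S.\<close>
definition gap_points :: "nat set \<Rightarrow> (int \<Rightarrow> bool) set" where
  "gap_points S = {x. (\<forall>m. \<exists>i>m. x i) \<and> (\<forall>m. \<exists>i<m. x i) \<and>
     (\<forall>i k. i < k \<and> x i \<and> x k \<and> (\<forall>j. i < j \<and> j < k \<longrightarrow> \<not> x j)
            \<longrightarrow> nat (k - i - 1) \<in> S)}"

definition window :: "(int \<Rightarrow> bool) \<Rightarrow> int \<Rightarrow> nat \<Rightarrow> bool list" where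
  "window x i n = map (\<lambda>j. x (i + int j)) [0..<n]"

definition words :: "nat \<Rightarrow> (int \<Rightarrow> bool) set \<Rightarrow> bool list set" where
  "words n X = {w. \<exists>x\<in>X. \<exists>i. w = window x i n}"

text \<open>The S-gap shift X(S): the closure (in the product topology) of gap_points S,
  i.e. all points every finite window of which occurs in a point of gap_points S.\<close>
definition gap_shift :: "nat set \<Rightarrow> (int \<Rightarrow> bool) set" where
  "gap_shift S = {x. \<forall>i n. window x i n \<in> words n (gap_points S)}"

definition entropy :: "(int \<Rightarrow> bool) set \<Rightarrow> real" where
  "entropy X = lim (\<lambda>n. log 2 (real (card (words n X))) / real n)"

end

theory Submission
  imports Defs "HOL-Real_Asymp.Real_Asymp"
begin

inductive good :: "nat set \<Rightarrow> bool list \<Rightarrow> bool" for S where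
  g0: "good S (replicate k False)"
| g1: "s \<in> S \<Longrightarrow> good S v \<Longrightarrow> good S (replicate s False @ True # v)"

inductive conc :: "nat set \<Rightarrow> bool list \<Rightarrow> bool" for S where
  c0: "conc S []"
| c1: "s \<in> S \<Longrightarrow> conc S c \<Longrightarrow> conc S (replicate s False @ True # c)"

inductive pre :: "nat set \<Rightarrow> nat \<Rightarrow> bool list \<Rightarrow> bool" for S N where
  p0: "k \<le> s \<Longrightarrow> s \<in> S \<Longrightarrow> s < N \<Longrightarrow> pre S N (replicate k False)"
| p1: "s \<in> S \<Longrightarrow> s < N \<Longrightarrow> pre S N v \<Longrightarrow> pre S N (replicate s False @ True # v)"

definition gapok :: "nat set \<Rightarrow> bool list \<Rightarrow> bool" where
  "gapok S w \<longleftrightarrow> (\<forall>p k. p < k \<and> k < length w \<and> w!p \<and> w!k \<and> (\<forall>j. p<j \<and> j<k \<longrightarrow> \<not> w!j) \<longrightarrow> k-p-1 \<in> S)"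

lemma nthL: "(replicate s False @ True # c) ! j = (if j < s then False else if j = s then True else c ! (j - Suc s))"
  by (auto simp: nth_append nth_Cons')

lemma blk_eq_iff[simp]: "(replicate s False @ True # v = replicate s' False @ True # v') \<longleftrightarrow> s = s' \<and> v = v'"
proof (induction s arbitrary: s')
  case 0 then show ?case by (cases s') auto
next
  case (Suc s) then show ?case by (cases s') auto
qed

lemma gap_pointsI:
  assumes "\<forall>m. \<exists>i>m. x i" "\<forall>m. \<exists>i<m. x i"
    and "\<And>i. x i \<Longrightarrow> \<exists>s\<in>S. x (i + int s + 1) \<and> (\<forall>j. i<j \<and> j < i + int s + 1 \<longrightarrow> \<not> x j)"
  shows "x \<in> gap_points S"
  unfolding gap_points_def
proof (intro CollectI conjI assms(1,2) allI impI)
  fix i k assume h: "i < k \<and> x i \<and> x k \<and> (\<forall>j. i < j \<and> j < k \<longrightarrow> \<not> x j)"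
  then obtain s where s: "s\<in>S" "x (i + int s + 1)" "\<forall>j. i<j \<and> j < i + int s + 1 \<longrightarrow> \<not> x j"
    using assms(3) by blast
  have "k = i + int s + 1"
  proof (rule ccontr)
    assume "k \<noteq> i + int s + 1"
    then have "k < i + int s + 1 \<or> i + int s + 1 < k" by linarith
    then show False
    proof
      assume "k < i + int s + 1" then show False using h s(3) by blast
    next
      assume "i + int s + 1 < k" then show False using h s(2) by force
    qed
  qed
  then show "nat (k - i - 1) \<in> S" using s by simp
qed

lemma conc_first: "conc S c \<Longrightarrow> c \<noteq> [] \<Longrightarrow> \<exists>s\<in>S. s < length c \<and> c!s \<and> (\<forall>j<s. \<not> c!j)"
  by (induction rule: conc.induct) (auto simp: nthL)

lemma conc_last: "conc S c \<Longrightarrow> c \<noteq> [] \<Longrightarrow> c ! (length c - 1)"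
proof (induction rule: conc.induct)
  case c0 then show ?case by simp
next
  case (c1 s c) then show ?case by (cases "c = []") (auto simp: nthL)
qed

lemma conc_next: "conc S c \<Longrightarrow> p < length c \<Longrightarrow> c!p \<Longrightarrow>
   p = length c - 1 \<or> (\<exists>s\<in>S. p+s+1 < length c \<and> c!(p+s+1) \<and> (\<forall>j. p<j \<and> j<p+s+1 \<longrightarrow> \<not> c!j))"
proof (induction arbitrary: p rule: conc.induct)
  case c0 then show ?case by simp
next
  case (c1 s c)
  let ?L = "replicate s False @ True # c"
  have "p \<ge> s" using c1.prems by (auto simp: nthL split: if_splits)
  show ?case
  proof (cases "p = s")
    case True
    show ?thesis
    proof (cases "c = []")
      case True then show ?thesis using \<open>p = s\<close> by simp
    next
      case False
      then obtain s' where s': "s'\<in>S" "s' < length c" "c!s'" "\<forall>j<s'. \<not> c!j"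
        using conc_first[OF c1.hyps(2)] by blast
      have "p+s'+1 < length ?L" using s' \<open>p = s\<close> by simp
      moreover have "?L!(p+s'+1)" using s' \<open>p = s\<close> by (simp add: nthL)
      moreover have "\<forall>j. p<j \<and> j<p+s'+1 \<longrightarrow> \<not> ?L!j"
      proof (intro allI impI)
        fix j assume "p<j \<and> j<p+s'+1"
        then show "\<not> ?L!j" using s' \<open>p = s\<close> by (auto simp: nthL)
      qed
      ultimately show ?thesis using s' by blast
    qed
  next
    case False
    then have ps: "p > s" using \<open>p \<ge> s\<close> by simp
    define p' where "p' = p - Suc s"
    have pp: "p = p' + Suc s" using ps p'_def by simp
    have "p' < length c" "c!p'" using c1.prems pp by (auto simp: nthL)
    from c1.IH[OF this] show ?thesis
    proof
      assume a: "p' = length c - 1"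
      have "length c > 0" using \<open>p' < length c\<close> by (cases c) auto
      then have "p = length ?L - 1" using pp a by simp
      then show ?thesis by blast
    next
      assume "\<exists>s'\<in>S. p'+s'+1 < length c \<and> c!(p'+s'+1) \<and> (\<forall>j. p'<j \<and> j<p'+s'+1 \<longrightarrow> \<not> c!j)"
      then obtain s' where s': "s'\<in>S" "p'+s'+1 < length c" "c!(p'+s'+1)" "\<forall>j. p'<j \<and> j<p'+s'+1 \<longrightarrow> \<not> c!j"
        by blast
      have "p+s'+1 < length ?L" using s' pp by simp
      moreover have "?L!(p+s'+1)" using s' pp by (simp add: nthL)
      moreover have "\<forall>j. p<j \<and> j<p+s'+1 \<longrightarrow> \<not> ?L!j"
      proof (intro allI impI)
        fix j assume j: "p<j \<and> j<p+s'+1"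
        then have "?L!j = c!(j - Suc s)" using pp by (simp add: nthL)
        moreover have "p' < j - Suc s \<and> j - Suc s < p'+s'+1" using j pp by linarith
        ultimately show "\<not> ?L!j" using s'(4) by simp
      qed
      ultimately show ?thesis using s' by blast
    qed
  qed
qed

definition per :: "bool list \<Rightarrow> int \<Rightarrow> bool" where
  "per c i = c ! nat (i mod int (length c))"

lemma per_eq: "r < length c \<Longrightarrow> per c (int (length c) * q + int r) = c ! r"
  unfolding per_def by (simp add: add.commute)

lemma per_split: "c \<noteq> [] \<Longrightarrow> i = int (length c) * (i div int (length c)) + int (nat (i mod int (length c)))
   \<and> nat (i mod int (length c)) < length c"
  by (simp add: nat_less_iff)

lemma per_gap:
  assumes c: "conc S c" "c \<noteq> []"
  shows "per c \<in> gap_points S"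
proof (rule gap_pointsI)
  define L where "L = length c"
  have L1: "L \<ge> 1" using c(2) L_def by (cases c) auto
  have last: "c ! (L - 1)" using conc_last[OF c] L_def by simp
  show "\<forall>m. \<exists>i>m. per c i"
  proof
    fix m :: int
    define q where "q = \<bar>m\<bar> + 1"
    have "int L * q \<ge> 1 * q" using L1 q_def by (intro mult_right_mono) auto
    then have "int L * q + int (L - 1) > m" using q_def by linarith
    moreover have "per c (int L * q + int (L - 1))" using per_eq[of "L - 1" c q] L_def L1 last by simp
    ultimately show "\<exists>i>m. per c i" by blast
  qed
  show "\<forall>m. \<exists>i<m. per c i"
  proof
    fix m :: int
    define q where "q = - \<bar>m\<bar> - 1"
    have "int L * (q + 1) \<le> 1 * (q + 1)" using L1 q_def
      by (intro mult_right_mono_neg) auto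
    then have A: "int L * (q + 1) \<le> q + 1" by simp
    have B: "int L * q + int (L - 1) = int L * (q+1) - 1" using L1 by (simp add: algebra_simps of_nat_diff)
    have C: "- \<bar>m\<bar> \<le> m" by simp
    have "int L * q + int (L - 1) < m" unfolding B using A C q_def by linarith
    moreover have "per c (int L * q + int (L - 1))" using per_eq[of "L - 1" c q] L_def L1 last by simp
    ultimately show "\<exists>i<m. per c i" by blast
  qed
  fix i assume xi: "per c i"
  define q where "q = i div int L"
  define r where "r = nat (i mod int L)"
  have ir: "i = int L * q + int r" "r < L" using per_split[OF c(2), of i] L_def q_def r_def by auto
  have cr: "c ! r" using xi ir per_eq[of r c q] L_def by simp
  from conc_next[OF c(1) _ cr] ir(2) L_def
  consider "r = L - 1" | "\<exists>s\<in>S. r+s+1 < L \<and> c!(r+s+1) \<and> (\<forall>j. r<j \<and> j<r+s+1 \<longrightarrow> \<not> c!j)" by auto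
  then show "\<exists>s\<in>S. per c (i + int s + 1) \<and> (\<forall>j. i<j \<and> j < i + int s + 1 \<longrightarrow> \<not> per c j)"
  proof cases
    case 1
    obtain s where s: "s\<in>S" "s < L" "c!s" "\<forall>j<s. \<not> c!j" using conc_first[OF c] L_def by blast
    have e: "i + int s + 1 = int L * (q+1) + int s" using ir 1 L1 by (simp add: algebra_simps of_nat_diff)
    have "per c (i + int s + 1)" unfolding e using per_eq[of s c "q+1"] s L_def by simp
    moreover have "\<forall>j. i<j \<and> j < i + int s + 1 \<longrightarrow> \<not> per c j"
    proof (intro allI impI)
      fix j assume j: "i<j \<and> j < i + int s + 1"
      define t where "t = nat (j - int L * (q+1))"
      have jt: "j = int L * (q+1) + int t" "t < s" using j e ir 1 L1 unfolding t_def
        by (auto simp: algebra_simps of_nat_diff)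
      show "\<not> per c j" using jt per_eq[of t c "q+1"] s L_def by simp
    qed
    ultimately show ?thesis using s by blast
  next
    case 2
    then obtain s where s: "s\<in>S" "r+s+1 < L" "c!(r+s+1)" "\<forall>j. r<j \<and> j<r+s+1 \<longrightarrow> \<not> c!j" by blast
    have e: "i + int s + 1 = int L * q + int (r+s+1)" using ir by simp
    have "per c (i + int s + 1)" unfolding e using per_eq[of "r+s+1" c q] s L_def by simp
    moreover have "\<forall>j. i<j \<and> j < i + int s + 1 \<longrightarrow> \<not> per c j"
    proof (intro allI impI)
      fix j assume j: "i<j \<and> j < i + int s + 1"
      define t where "t = nat (j - int L * q)"
      have jt: "j = int L * q + int t" "r < t" "t < r+s+1" using j e ir unfolding t_def
        by auto
      show "\<not> per c j" using jt per_eq[of t c q] s L_def by simp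
    qed
    ultimately show ?thesis using s by blast
  qed
qed

lemma per_window: "i + n \<le> length c \<Longrightarrow> window (per c) (int i) n = take n (drop i c)"
  unfolding window_def
  by (rule nth_equalityI) (auto simp: per_eq[of _ c 0, simplified] simp del: of_nat_add simp add: of_nat_add[symmetric])

lemma pre_take: "pre S N w \<Longrightarrow> \<exists>c. conc S c \<and> c \<noteq> [] \<and> length w \<le> length c \<and> w = take (length w) c"
proof (induction rule: pre.induct)
  case (p0 k s)
  have "conc S (replicate s False @ True # [])" using p0 by (intro c1 c0)
  then show ?case using p0 by (intro exI[of _ "replicate s False @ [True]"]) auto
next
  case (p1 s v)
  then obtain c where c: "conc S c" "c \<noteq> []" "length v \<le> length c" "v = take (length v) c" by blast
  have "conc S (replicate s False @ True # c)" using p1 c by (intro c1)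
  then show ?case using c
    by (intro exI[of _ "replicate s False @ True # c"]) (auto simp: take_Cons')
qed

lemma pre_words: "pre S N w \<Longrightarrow> w \<in> words (length w) (gap_points S)"
proof -
  assume "pre S N w"
  then obtain c where c: "conc S c" "c \<noteq> []" "length w \<le> length c" "w = take (length w) c"
    using pre_take by blast
  have "w = window (per c) 0 (length w)" using per_window[of 0 "length w" c] c by simp
  then show ?thesis unfolding words_def using per_gap[OF c(1,2)] by blast
qed

lemma gapok_window: "x \<in> gap_points S \<Longrightarrow> gapok S (window x i n)"
  unfolding gapok_def
proof (intro allI impI)
  fix p k assume x: "x \<in> gap_points S"
    and h: "p < k \<and> k < length (window x i n) \<and> window x i n ! p \<and> window x i n ! k \<and>
      (\<forall>j. p < j \<and> j < k \<longrightarrow> \<not> window x i n ! j)"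
  have kn: "k < n" using h by (simp add: window_def)
  have xp: "x (i + int p)" "x (i + int k)" using h kn by (auto simp: window_def)
  have btw: "\<forall>j. i + int p < j \<and> j < i + int k \<longrightarrow> \<not> x j"
  proof (intro allI impI)
    fix j assume j: "i + int p < j \<and> j < i + int k"
    define t where "t = nat (j - i)"
    have t: "j = i + int t" "p < t" "t < k" using j unfolding t_def by auto
    then have "\<not> window x i n ! t" using h by blast
    then show "\<not> x j" using t kn by (simp add: window_def)
  qed
  have gp: "\<forall>i k. i < k \<and> x i \<and> x k \<and> (\<forall>j. i < j \<and> j < k \<longrightarrow> \<not> x j) \<longrightarrow> nat (k - i - 1) \<in> S"
    using x unfolding gap_points_def by blast
  have "nat ((i + int k) - (i + int p) - 1) \<in> S"
    using gp[rule_format, of "i + int p" "i + int k"] xp btw h by simp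
  moreover have "nat ((i + int k) - (i + int p) - 1) = k - p - 1" using h by auto
  ultimately show "k - p - 1 \<in> S" by simp
qed

lemma gapok_drop: "gapok S w \<Longrightarrow> gapok S (drop m w)"
  unfolding gapok_def
proof (intro allI impI)
  fix p k assume g: "\<forall>p k. p < k \<and> k < length w \<and> w ! p \<and> w ! k \<and> (\<forall>j. p < j \<and> j < k \<longrightarrow> \<not> w ! j) \<longrightarrow> k - p - 1 \<in> S"
    and h: "p < k \<and> k < length (drop m w) \<and> drop m w ! p \<and> drop m w ! k \<and> (\<forall>j. p < j \<and> j < k \<longrightarrow> \<not> drop m w ! j)"
  have "\<forall>j. m + p < j \<and> j < m + k \<longrightarrow> \<not> w ! j"
  proof (intro allI impI)
    fix j assume j: "m + p < j \<and> j < m + k"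
    have jj: "p < j - m \<and> j - m < k" using j by linarith
    then have "\<not> w ! (m + (j - m))" using h by auto
    moreover have "m + (j - m) = j" using j by simp
    ultimately show "\<not> w ! j" by simp
  qed
  then have "(m + k) - (m + p) - 1 \<in> S" using g[rule_format, of "m+p" "m+k"] h by auto
  then show "k - p - 1 \<in> S" by simp
qed

lemma all_false: "True \<notin> set v \<Longrightarrow> v = replicate (length v) False"
  by (metis (full_types) replicate_length_same)

lemma gapok_split:
  assumes "gapok S (True # replicate s False @ True # zs)"
  shows "s \<in> S" "gapok S (True # zs)"
proof -
  let ?w = "True # replicate s False @ True # zs"
  have g: "\<forall>p k. p < k \<and> k < length ?w \<and> ?w!p \<and> ?w!k \<and> (\<forall>j. p<j \<and> j<k \<longrightarrow> \<not> ?w!j) \<longrightarrow> k-p-1 \<in> S"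
    using assms unfolding gapok_def by blast
  have a: "?w ! Suc s" by (simp add: nthL)
  have b: "\<forall>j. 0<j \<and> j<Suc s \<longrightarrow> \<not> ?w!j"
  proof (intro allI impI)
    fix j :: nat assume "0<j \<and> j<Suc s"
    then obtain j' where "j = Suc j'" "j' < s" by (cases j) auto
    then show "\<not> ?w!j" by (simp add: nthL)
  qed
  have "Suc s - 0 - 1 \<in> S"
    using g[rule_format, of 0 "Suc s"] a b by simp
  then show "s \<in> S" by simp
  have "drop (Suc s) ?w = True # zs" by simp
  then show "gapok S (True # zs)" using gapok_drop[OF assms, of "Suc s"] by simp
qed

lemma gapok_good: "gapok S (True # v) \<Longrightarrow> good S v"
proof (induction "length v" arbitrary: v rule: less_induct)
  case less
  show ?case
  proof (cases "True \<in> set v")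
    case False
    then have "v = replicate (length v) False" by (rule all_false)
    then show ?thesis by (metis g0)
  next
    case True
    then obtain ys zs where v: "v = ys @ True # zs" "True \<notin> set ys" by (metis split_list_first)
    define s where "s = length ys"
    have ys: "ys = replicate s False" using all_false[OF v(2)] s_def by simp
    have g: "gapok S (True # replicate s False @ True # zs)" using less.prems v ys by simp
    have "good S zs" using less.hyps[OF _ gapok_split(2)[OF g]] v by simp
    then show ?thesis using gapok_split(1)[OF g] v ys by (simp add: g1)
  qed
qed

lemma window_decomp: "gapok S w \<Longrightarrow> w = replicate (length w) False \<or> (\<exists>a v. w = replicate a False @ True # v \<and> good S v)"
proof (cases "True \<in> set w")
  case False then show ?thesis by (simp add: all_false)
next
  case True
  assume g: "gapok S w"
  obtain ys zs where v: "w = ys @ True # zs" "True \<notin> set ys" using True by (metis split_list_first)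
  define a where "a = length ys"
  have ys: "ys = replicate a False" using all_false[OF v(2)] a_def by simp
  have "drop a w = True # zs" using v ys by simp
  then have "gapok S (True # zs)" using gapok_drop[OF g, of a] by simp
  then show ?thesis using v ys gapok_good by blast
qed

definition ps :: "nat set \<Rightarrow> real \<Rightarrow> nat \<Rightarrow> real" where
  "ps S y N = (\<Sum>j<N. (if j \<in> S then 1 else 0) / y ^ Suc j)"

lemma ps_filter: "(\<Sum>s\<in>{s. s<N \<and> s\<in>S}. 1 / y ^ Suc s) = ps S y N"
proof -
  have e: "{s. s<N \<and> s\<in>S} = {s\<in>{..<N}. s \<in> S}" by auto
  have "(\<Sum>s\<in>{s. s<N \<and> s\<in>S}. 1 / y ^ Suc s) = (\<Sum>j<N. if j \<in> S then 1 / y^Suc j else 0)"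
    unfolding e by (rule sum.inter_filter) simp
  also have "\<dots> = ps S y N" unfolding ps_def by (intro sum.cong) auto
  finally show ?thesis .
qed

definition Rset :: "nat set \<Rightarrow> nat \<Rightarrow> bool list set" where
  "Rset S m = {w. length w = m \<and> good S w}"

definition Lset :: "nat set \<Rightarrow> nat \<Rightarrow> nat \<Rightarrow> bool list set" where
  "Lset S N n = {w. length w = n \<and> pre S N w}"

lemma finite_len: "finite {w::bool list. length w = m}"
  using finite_lists_length_eq[of "UNIV :: bool set" m] by simp

lemma finite_Rset: "finite (Rset S m)"
  by (rule finite_subset[OF _ finite_len[of m]]) (auto simp: Rset_def)

lemma finite_Lset: "finite (Lset S N m)"
  by (rule finite_subset[OF _ finite_len[of m]]) (auto simp: Lset_def)

lemma finite_words: "finite (words n X)"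
  by (rule finite_subset[OF _ finite_len[of n]]) (auto simp: words_def window_def)

lemma R_sub: "Rset S m \<subseteq> {replicate m False} \<union> (\<Union>s\<in>{s. s<m \<and> s\<in>S}. (\<lambda>v. replicate s False @ True # v) ` Rset S (m - Suc s))"
proof
  fix w assume "w \<in> Rset S m"
  then have w: "length w = m" "good S w" by (auto simp: Rset_def)
  from w(2) show "w \<in> {replicate m False} \<union> (\<Union>s\<in>{s. s<m \<and> s\<in>S}. (\<lambda>v. replicate s False @ True # v) ` Rset S (m - Suc s))"
  proof cases
    case (g0 k) then show ?thesis using w by simp
  next
    case (g1 s v)
    then have "s < m" "v \<in> Rset S (m - Suc s)" using w by (auto simp: Rset_def)
    then show ?thesis using g1 by blast
  qed
qed

lemma R_card:
  assumes x: "1 \<le> x" and P: "\<forall>N. ps S x N \<le> 1"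
  shows "real (card (Rset S m)) \<le> (real m + 1) * x^m"
proof (induction m rule: less_induct)
  case (less m)
  define F where "F = {s. s<m \<and> s\<in>S}"
  have fF: "finite F" unfolding F_def by simp
  have "card (Rset S m) \<le> card ({replicate m False} \<union> (\<Union>s\<in>F. (\<lambda>v. replicate s False @ True # v) ` Rset S (m - Suc s)))"
    using R_sub[of S m] unfolding F_def[symmetric]
    by (intro card_mono) (auto intro!: finite_UN_I fF finite_Rset)
  also have "\<dots> \<le> 1 + card (\<Union>s\<in>F. (\<lambda>v. replicate s False @ True # v) ` Rset S (m - Suc s))"
    using card_Un_le[of "{replicate _ False}"] by simp
  also have "\<dots> \<le> 1 + (\<Sum>s\<in>F. card ((\<lambda>v. replicate s False @ True # v) ` Rset S (m - Suc s)))"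
    using card_UN_le[OF fF] by simp
  also have "\<dots> \<le> 1 + (\<Sum>s\<in>F. card (Rset S (m - Suc s)))"
    by (intro add_left_mono sum_mono card_image_le finite_Rset)
  finally have c0: "card (Rset S m) \<le> 1 + (\<Sum>s\<in>F. card (Rset S (m - Suc s)))" .
  have c: "real (card (Rset S m)) \<le> 1 + (\<Sum>s\<in>F. real (card (Rset S (m - Suc s))))"
    using of_nat_mono[OF c0, where 'a=real] by simp
  have x0: "x > 0" using x by simp
  have "(\<Sum>s\<in>F. real (card (Rset S (m - Suc s)))) \<le> (\<Sum>s\<in>F. real m * (x^m * (1 / x ^ Suc s)))"
  proof (rule sum_mono)
    fix s assume s: "s \<in> F"
    then have sm: "s < m" unfolding F_def by simp
    have "real (card (Rset S (m - Suc s))) \<le> (real (m - Suc s) + 1) * x^(m - Suc s)"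
      using sm by (intro less) simp
    also have "\<dots> \<le> real m * x^(m - Suc s)"
      using sm x by (intro mult_right_mono) (auto simp: of_nat_diff)
    also have "x^(m - Suc s) = x^m * (1 / x ^ Suc s)"
      using sm x0 by (simp add: power_diff)
    finally show "real (card (Rset S (m - Suc s))) \<le> real m * (x^m * (1 / x ^ Suc s))" .
  qed
  also have "\<dots> = real m * x^m * ps S x m"
    unfolding ps_filter[symmetric] F_def by (simp add: sum_distrib_left mult.assoc)
  also have "\<dots> \<le> real m * x^m"
    using P x by (intro mult_left_le) auto
  finally have "real (card (Rset S m)) \<le> 1 + real m * x^m" using c by linarith
  also have "\<dots> \<le> (real m + 1) * x^m" using x by (simp add: algebra_simps one_le_power)
  finally show ?case .
qed

lemma words_sub: "words n (gap_points S) \<subseteq> {replicate n False} \<union> (\<Union>a\<in>{..<n}. (\<lambda>v. replicate a False @ True # v) ` Rset S (n - Suc a))"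
proof
  fix w assume "w \<in> words n (gap_points S)"
  then obtain x i where xi: "x \<in> gap_points S" "w = window x i n" unfolding words_def by blast
  have len: "length w = n" using xi by (simp add: window_def)
  from window_decomp[OF gapok_window[OF xi(1), of i n]] xi(2)
  have "w = replicate (length w) False \<or> (\<exists>a v. w = replicate a False @ True # v \<and> good S v)" by simp
  then show "w \<in> {replicate n False} \<union> (\<Union>a\<in>{..<n}. (\<lambda>v. replicate a False @ True # v) ` Rset S (n - Suc a))"
  proof
    assume "w = replicate (length w) False" then show ?thesis using len by simp
  next
    assume "\<exists>a v. w = replicate a False @ True # v \<and> good S v"
    then obtain a v where av: "w = replicate a False @ True # v" "good S v" by blast
    then have "a < n" "v \<in> Rset S (n - Suc a)" using len by (auto simp: Rset_def)
    then show ?thesis using av by blast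
  qed
qed

lemma words_upper:
  assumes x: "1 \<le> x" and P: "\<forall>N. ps S x N \<le> 1"
  shows "real (card (words n (gap_points S))) \<le> (real n + 1)^2 * x^n"
proof -
  have "card (words n (gap_points S)) \<le> card ({replicate n False} \<union> (\<Union>a\<in>{..<n}. (\<lambda>v. replicate a False @ True # v) ` Rset S (n - Suc a)))"
    using words_sub[of n S] by (intro card_mono) (auto intro!: finite_UN_I finite_Rset)
  also have "\<dots> \<le> 1 + card (\<Union>a\<in>{..<n}. (\<lambda>v. replicate a False @ True # v) ` Rset S (n - Suc a))"
    using card_Un_le[of "{replicate _ False}"] by simp
  also have "\<dots> \<le> 1 + (\<Sum>a<n. card ((\<lambda>v. replicate a False @ True # v) ` Rset S (n - Suc a)))"
    using card_UN_le[of "{..<n}"] by simp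
  also have "\<dots> \<le> 1 + (\<Sum>a<n. card (Rset S (n - Suc a)))"
    by (intro add_left_mono sum_mono card_image_le finite_Rset)
  finally have c0: "card (words n (gap_points S)) \<le> 1 + (\<Sum>a<n. card (Rset S (n - Suc a)))" .
  have c: "real (card (words n (gap_points S))) \<le> 1 + (\<Sum>a<n. real (card (Rset S (n - Suc a))))"
    using of_nat_mono[OF c0, where 'a=real] by simp
  have "(\<Sum>a<n. real (card (Rset S (n - Suc a)))) \<le> (\<Sum>a<n. real n * x^n)"
  proof (rule sum_mono)
    fix a assume "a \<in> {..<n}"
    then have an: "a < n" by simp
    have "real (card (Rset S (n - Suc a))) \<le> (real (n - Suc a) + 1) * x^(n - Suc a)"
      using R_card[OF x P] by simp
    also have "\<dots> \<le> real n * x^n"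
      using an x by (intro mult_mono power_increasing) (auto simp: of_nat_diff)
    finally show "real (card (Rset S (n - Suc a))) \<le> real n * x^n" .
  qed
  also have "\<dots> = real n * real n * x^n" by simp
  finally have "real (card (words n (gap_points S))) \<le> 1 + real n * real n * x^n" using c by linarith
  also have "\<dots> \<le> (real n + 1)^2 * x^n"
  proof -
    have xn: "1 \<le> x^n" using one_le_power[OF x] by simp
    have "0 \<le> real n * x^n" using xn by simp
    moreover have "(real n + 1)^2 * x^n = real n * real n * x^n + 2 * (real n * x^n) + x^n"
      by (simp add: power2_eq_square algebra_simps)
    ultimately show ?thesis using xn by linarith
  qed
  finally show ?thesis .
qed


lemma L_card:
  assumes y: "1 \<le> y" and P: "1 \<le> ps S y N"
  shows "y^n \<le> real (card (Lset S N n)) * y^N"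
proof (induction n rule: less_induct)
  case (less n)
  define F where "F = {s. s<N \<and> s\<in>S}"
  have fF: "finite F" unfolding F_def by simp
  have Fne: "F \<noteq> {}"
  proof
    assume "F = {}"
    moreover have "ps S y N = (\<Sum>s\<in>F. 1 / y ^ Suc s)" unfolding F_def by (rule ps_filter[symmetric])
    ultimately have "ps S y N = 0" by simp
    then show False using P by simp
  qed
  define smax where "smax = Max F"
  have sm: "smax \<in> F" using fF Fne smax_def by simp
  have y0: "y > 0" using y by simp
  show ?case
  proof (cases "n \<le> smax")
    case True
    have "pre S N (replicate n False)" using sm True unfolding F_def by (intro p0[of n smax]) auto
    then have "replicate n False \<in> Lset S N n" by (simp add: Lset_def)
    then have "card (Lset S N n) > 0" using finite_Lset card_gt_0_iff by blast
    then have c1: "1 \<le> real (card (Lset S N n))" by simp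
    have "y^n \<le> y^N" using y True sm unfolding F_def by (intro power_increasing) auto
    also have "\<dots> = 1 * y^N" by simp
    also have "\<dots> \<le> real (card (Lset S N n)) * y^N" using c1 y0 by (intro mult_right_mono) auto
    finally show ?thesis .
  next
    case False
    have lt: "\<forall>s\<in>F. s < n" using False Max_ge[OF fF] smax_def by fastforce
    define f where "f s = (\<lambda>v. replicate s False @ True # v)" for s
    have sub: "(\<Union>s\<in>F. f s ` Lset S N (n - Suc s)) \<subseteq> Lset S N n"
    proof
      fix w assume "w \<in> (\<Union>s\<in>F. f s ` Lset S N (n - Suc s))"
      then obtain s v where sv: "s \<in> F" "v \<in> Lset S N (n - Suc s)" "w = f s v" by blast
      then have "pre S N w" using sv unfolding f_def F_def Lset_def by (auto intro: p1)
      moreover have "length w = n" using sv lt unfolding f_def Lset_def by auto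
      ultimately show "w \<in> Lset S N n" by (simp add: Lset_def)
    qed
    have "card (\<Union>s\<in>F. f s ` Lset S N (n - Suc s)) = (\<Sum>s\<in>F. card (f s ` Lset S N (n - Suc s)))"
      by (rule card_UN_disjoint) (auto simp: f_def finite_Lset fF)
    also have "\<dots> = (\<Sum>s\<in>F. card (Lset S N (n - Suc s)))"
      by (intro sum.cong refl card_image) (auto simp: inj_on_def f_def)
    finally have "(\<Sum>s\<in>F. card (Lset S N (n - Suc s))) \<le> card (Lset S N n)"
      using card_mono[OF finite_Lset sub] by simp
    then have cs: "(\<Sum>s\<in>F. real (card (Lset S N (n - Suc s)))) \<le> real (card (Lset S N n))"
      using of_nat_mono[where 'a=real] by (metis of_nat_sum)
    have "y^n = y^n * 1" by simp
    also have "\<dots> \<le> y^n * ps S y N" using P y0 by (intro mult_left_mono) auto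
    also have "\<dots> = (\<Sum>s\<in>F. y^(n - Suc s))"
      unfolding ps_filter[symmetric] F_def[symmetric] sum_distrib_left
    proof (intro sum.cong refl)
      fix s assume "s \<in> F"
      then have "Suc s \<le> n" using lt by auto
      then show "y ^ n * (1 / y ^ Suc s) = y ^ (n - Suc s)" using y0 by (simp add: power_diff)
    qed
    also have "\<dots> \<le> (\<Sum>s\<in>F. real (card (Lset S N (n - Suc s))) * y^N)"
      by (intro sum_mono less) (use lt in auto)
    also have "\<dots> = (\<Sum>s\<in>F. real (card (Lset S N (n - Suc s)))) * y^N"
      by (simp add: sum_distrib_right)
    also have "\<dots> \<le> real (card (Lset S N n)) * y^N"
      using cs y0 by (intro mult_right_mono) auto
    finally show ?thesis .
  qed
qed

lemma words_lower:
  assumes y: "1 \<le> y" and P: "1 \<le> ps S y N"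
  shows "y^n \<le> real (card (words n (gap_points S))) * y^N"
proof -
  have "Lset S N n \<subseteq> words n (gap_points S)"
    using pre_words unfolding Lset_def by fastforce
  then have "card (Lset S N n) \<le> card (words n (gap_points S))"
    by (intro card_mono finite_words)
  then have "real (card (Lset S N n)) * y^N \<le> real (card (words n (gap_points S))) * y^N"
    using y by (intro mult_right_mono) auto
  then show ?thesis using L_card[OF y P, of n] by linarith
qed

lemma gap_points_sub: "gap_points S \<subseteq> gap_shift S"
proof
  fix x assume x: "x \<in> gap_points S"
  have "window x i n \<in> words n (gap_points S)" for i n
    unfolding words_def using x by blast
  then show "x \<in> gap_shift S" unfolding gap_shift_def by blast
qed

lemma words_shift: "words n (gap_shift S) = words n (gap_points S)"
proof
  show "words n (gap_shift S) \<subseteq> words n (gap_points S)"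
  proof
    fix w assume "w \<in> words n (gap_shift S)"
    then obtain x i where "x \<in> gap_shift S" "w = window x i n" unfolding words_def by blast
    then show "w \<in> words n (gap_points S)" unfolding gap_shift_def by blast
  qed
  show "words n (gap_points S) \<subseteq> words n (gap_shift S)"
    using gap_points_sub unfolding words_def by blast
qed

lemma mem_S_iff: "s \<in> S \<longleftrightarrow> True # replicate s False @ [True] \<in> words (Suc (Suc s)) (gap_shift S)"
proof
  assume s: "s \<in> S"
  define c where "c = replicate s False @ True # replicate s False @ True # []"
  have cc: "conc S c" unfolding c_def using s by (intro c1 c0)
  have "window (per c) (int s) (Suc (Suc s)) = take (Suc (Suc s)) (drop s c)"
    by (rule per_window) (simp add: c_def)
  also have "\<dots> = True # replicate s False @ [True]" by (simp add: c_def)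
  finally have e: "True # replicate s False @ [True] = window (per c) (int s) (Suc (Suc s))" by simp
  have "per c \<in> gap_points S" using per_gap[OF cc] c_def by simp
  then have "True # replicate s False @ [True] \<in> words (Suc (Suc s)) (gap_points S)"
    unfolding words_def using e by blast
  then show "True # replicate s False @ [True] \<in> words (Suc (Suc s)) (gap_shift S)"
    using words_shift by blast
next
  assume "True # replicate s False @ [True] \<in> words (Suc (Suc s)) (gap_shift S)"
  then have "True # replicate s False @ [True] \<in> words (Suc (Suc s)) (gap_points S)"
    using words_shift by blast
  then obtain x i where "x \<in> gap_points S" "True # replicate s False @ [True] = window x i (Suc (Suc s))"
    unfolding words_def by blast
  then have "gapok S (True # replicate s False @ True # [])" using gapok_window by fastforce
  then show "s \<in> S" by (rule gapok_split(1))
qed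

lemma gap_shift_inj: assumes "gap_shift S = gap_shift S'" shows "S = S'"
proof (rule set_eqI)
  fix s
  have "s \<in> S \<longleftrightarrow> True # replicate s False @ [True] \<in> words (Suc (Suc s)) (gap_shift S)" by (rule mem_S_iff)
  also have "\<dots> \<longleftrightarrow> True # replicate s False @ [True] \<in> words (Suc (Suc s)) (gap_shift S')" using assms by simp
  also have "\<dots> \<longleftrightarrow> s \<in> S'" by (rule mem_S_iff[symmetric])
  finally show "s \<in> S \<longleftrightarrow> s \<in> S'" .
qed

lemma words_pos: "S \<noteq> {} \<Longrightarrow> card (words n (gap_points S)) > 0"
proof -
  assume "S \<noteq> {}"
  then obtain s where s: "s \<in> S" by blast
  define c where "c = replicate s False @ True # []"
  have cc: "conc S c" unfolding c_def using s by (intro c1 c0)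
  have "per c \<in> gap_points S" using per_gap[OF cc] c_def by simp
  then have "window (per c) 0 n \<in> words n (gap_points S)"
    unfolding words_def by blast
  then show ?thesis using finite_words card_gt_0_iff by blast
qed

definition Yset :: "nat set \<Rightarrow> real set" where
  "Yset S = {y. 1 \<le> y \<and> (\<exists>N. 1 \<le> ps S y N)}"

lemma ps_antimono: "0 < z \<Longrightarrow> z \<le> y \<Longrightarrow> ps S y N \<le> ps S z N"
  unfolding ps_def by (intro sum_mono divide_left_mono power_mono mult_pos_pos) auto

lemma geom_half: "(\<Sum>j<N. 1 / (2::real) ^ Suc j) = 1 - 1 / 2^N"
  by (induction N) (auto simp: field_simps)

lemma ps_lt1: "2 \<le> y \<Longrightarrow> ps S y N < 1"
proof -
  assume y: "2 \<le> y"
  have "ps S y N \<le> (\<Sum>j<N. 1 / (2::real) ^ Suc j)"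
    unfolding ps_def
  proof (intro sum_mono)
    fix j
    have "(if j \<in> S then 1 else 0) / y ^ Suc j \<le> 1 / y ^ Suc j" using y by (simp add: divide_right_mono)
    also have "\<dots> \<le> 1 / 2 ^ Suc j" using y by (intro divide_left_mono power_mono) auto
    finally show "(if j \<in> S then 1 else 0) / y ^ Suc j \<le> 1 / 2 ^ Suc j" .
  qed
  also have "\<dots> < 1" unfolding geom_half by simp
  finally show ?thesis .
qed

lemma Y_props:
  assumes "S \<noteq> {}"
  shows "1 \<in> Yset S" "\<And>y. y \<in> Yset S \<Longrightarrow> 1 \<le> y \<and> y < 2" "bdd_above (Yset S)" "Yset S \<noteq> {}"
    "\<And>y z. y \<in> Yset S \<Longrightarrow> 1 \<le> z \<Longrightarrow> z \<le> y \<Longrightarrow> z \<in> Yset S"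
    "1 \<le> Sup (Yset S)" "Sup (Yset S) \<le> 2"
proof -
  obtain s0 where s0: "s0 \<in> S" using assms by blast
  have "ps S 1 (Suc s0) = (\<Sum>s\<in>{s. s < Suc s0 \<and> s \<in> S}. 1)" using ps_filter[where N="Suc s0" and S=S and y=1] by simp
  also have "\<dots> = real (card {s. s < Suc s0 \<and> s \<in> S})" by simp
  also have "\<dots> \<ge> 1"
  proof -
    have "s0 \<in> {s. s < Suc s0 \<and> s \<in> S}" using s0 by simp
    then have "card {s. s < Suc s0 \<and> s \<in> S} > 0" by (subst card_gt_0_iff) auto
    then show ?thesis by simp
  qed
  finally show one: "1 \<in> Yset S" unfolding Yset_def by auto
  show lt: "\<And>y. y \<in> Yset S \<Longrightarrow> 1 \<le> y \<and> y < 2"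
    unfolding Yset_def using ps_lt1 by (force simp: not_less[symmetric])
  then show bdd: "bdd_above (Yset S)" by (meson bdd_above.I less_imp_le)
  show ne: "Yset S \<noteq> {}" using one by blast
  show "\<And>y z. y \<in> Yset S \<Longrightarrow> 1 \<le> z \<Longrightarrow> z \<le> y \<Longrightarrow> z \<in> Yset S"
    unfolding Yset_def using ps_antimono by (smt (verit, best) mem_Collect_eq)
  show "1 \<le> Sup (Yset S)" using cSup_upper[OF one bdd] .
  show "Sup (Yset S) \<le> 2" using lt ne by (meson cSup_least less_imp_le)
qed


lemma log_over_n: "(\<lambda>n. 2 * log 2 (real n + 1) / real n) \<longlonglongrightarrow> 0"
  unfolding log_def by real_asymp

lemma entropy_eq:
  assumes S: "S \<noteq> {}"
  shows "entropy (gap_shift S) = log 2 (Sup (Yset S))"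
proof -
  define B where "B n = real (card (words n (gap_points S)))" for n
  define \<mu> where "\<mu> = Sup (Yset S)"
  note Y = Y_props[OF S]
  have mu1: "1 \<le> \<mu>" using Y(6) \<mu>_def by simp
  have Bpos: "B n > 0" for n using words_pos[OF S] B_def by simp
  have "(\<lambda>n. log 2 (B n) / real n) \<longlonglongrightarrow> log 2 \<mu>"
  proof (rule tendstoI)
    fix e :: real assume e: "0 < e"
    define z where "z = \<mu> / 2 powr (e/2)"
    have p2: "2 powr (e/2) > 1" using e by simp
    have "z < \<mu>" unfolding z_def using p2 mu1 by (simp add: divide_less_eq)
    then obtain y where y: "y \<in> Yset S" "z < y" using less_cSup_iff[OF Y(4) Y(3)] \<mu>_def by blast
    then obtain N where N: "1 \<le> ps S y N" "1 \<le> y" unfolding Yset_def by blast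
    have z0: "z > 0" unfolding z_def using mu1 by simp
    have ly: "log 2 y > log 2 \<mu> - e/2"
    proof -
      have "log 2 z = log 2 \<mu> - e/2" unfolding z_def using mu1 by (simp add: log_divide)
      moreover have "log 2 z < log 2 y" using z0 y(2) by simp
      ultimately show ?thesis by simp
    qed
    have lower: "log 2 (B n) / real n \<ge> log 2 y - real N * log 2 y / real n" if n: "n > 0" for n
    proof -
      have "y^n \<le> B n * y^N" using words_lower[OF N(2) N(1), of n] B_def by simp
      then have "log 2 (y^n) \<le> log 2 (B n * y^N)" using N(2) Bpos by simp
      then have "real n * log 2 y \<le> log 2 (B n) + real N * log 2 y"
        using N(2) Bpos[of n] by (simp add: log_mult log_nat_power)
      then have "(real n * log 2 y - real N * log 2 y) / real n \<le> log 2 (B n) / real n"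
        using n by (intro divide_right_mono) auto
      moreover have "(real n * log 2 y - real N * log 2 y) / real n = log 2 y - real N * log 2 y / real n"
        using n by (simp add: diff_divide_distrib)
      ultimately show ?thesis by simp
    qed
    have ev1: "eventually (\<lambda>n. real N * log 2 y / real n < e/2) sequentially"
    proof -
      have "(0::real) < e/2" using e by simp
      then show ?thesis by (rule order_tendstoD(2)[OF lim_const_over_n[of "real N * log 2 y"]])
    qed
    define x where "x = \<mu> * 2 powr (e/4)"
    have p4: "2 powr (e/4) > 1" using e by simp
    have xmu: "x > \<mu>" unfolding x_def using p4 mu1 by simp
    have x1: "1 \<le> x" using xmu mu1 by simp
    have xnot: "x \<notin> Yset S"
    proof
      assume "x \<in> Yset S"
      then have "x \<le> \<mu>" unfolding \<mu>_def using cSup_upper[OF _ Y(3)] by blast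
      then show False using xmu by simp
    qed
    have P: "\<forall>N. ps S x N \<le> 1"
    proof
      fix N' show "ps S x N' \<le> 1"
      proof (rule ccontr)
        assume "\<not> ps S x N' \<le> 1"
        then have "1 \<le> ps S x N'" by simp
        then have "x \<in> Yset S" unfolding Yset_def using x1 by auto
        then show False using xnot by simp
      qed
    qed
    have lx: "log 2 x = log 2 \<mu> + e/4" unfolding x_def using mu1 by (simp add: log_mult)
    have upper: "log 2 (B n) / real n \<le> 2 * log 2 (real n + 1) / real n + log 2 x" if n: "n > 0" for n
    proof -
      have "B n \<le> (real n + 1)^2 * x^n" using words_upper[OF x1 P, of n] B_def by simp
      then have "log 2 (B n) \<le> log 2 ((real n + 1)^2 * x^n)" using x1 Bpos by simp
      then have "log 2 (B n) \<le> 2 * log 2 (real n + 1) + real n * log 2 x"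
        using x1 Bpos[of n] by (simp add: log_mult log_nat_power)
      then have "log 2 (B n) / real n \<le> (2 * log 2 (real n + 1) + real n * log 2 x) / real n"
        using n by (intro divide_right_mono) auto
      moreover have "(2 * log 2 (real n + 1) + real n * log 2 x) / real n = 2 * log 2 (real n + 1) / real n + log 2 x"
        using n by (simp add: add_divide_distrib)
      ultimately show ?thesis by simp
    qed
    have ev2: "eventually (\<lambda>n. 2 * log 2 (real n + 1) / real n < e/2) sequentially"
    proof -
      have "(0::real) < e/2" using e by simp
      then show ?thesis by (rule order_tendstoD(2)[OF log_over_n])
    qed
    have ev3: "eventually (\<lambda>n. n > (0::nat)) sequentially" by (rule eventually_gt_at_top)
    show "eventually (\<lambda>n. dist (log 2 (B n) / real n) (log 2 \<mu>) < e) sequentially"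
      using ev1 ev2 ev3
    proof eventually_elim
      case (elim n)
      have "log 2 (B n) / real n \<ge> log 2 y - real N * log 2 y / real n" using lower elim by simp
      moreover have "log 2 (B n) / real n \<le> 2 * log 2 (real n + 1) / real n + log 2 x" using upper elim by simp
      ultimately show ?case using elim ly lx by (simp add: dist_real_def abs_less_iff)
    qed
  qed
  then show ?thesis unfolding entropy_def words_shift B_def \<mu>_def by (rule limI)
qed

lemma diff_small:
  fixes a d :: real
  assumes a: "0 < a" and d: "0 < d"
  shows "\<exists>t>0. t \<le> a/2 \<and> 1/a - 1/(a+t) < d \<and> 1/(a-t) - 1/a < d"
proof -
  define t where "t = min (a/2) (d*a^2/4)"
  have t0: "t > 0" using a d unfolding t_def by simp
  have ta: "t \<le> a/2" "t \<le> d*a^2/4" unfolding t_def by auto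
  have e1: "1/a - 1/(a+t) = t/(a*(a+t))" using a t0 by (simp add: field_simps)
  have "t/(a*(a+t)) \<le> t/(a*a)" using a t0 by (intro divide_left_mono mult_left_mono) auto
  also have "\<dots> \<le> (d*a^2/4)/(a*a)" using ta a by (intro divide_right_mono) auto
  also have "\<dots> = d/4" using a by (simp add: power2_eq_square)
  finally have "t/(a*(a+t)) \<le> d/4" .
  then have 1: "1/a - 1/(a+t) < d" using e1 d by linarith
  have at: "a - t \<ge> a/2" using ta by simp
  have e2: "1/(a-t) - 1/a = t/(a*(a-t))" using a t0 at by (simp add: field_simps)
  have "t/(a*(a-t)) \<le> t/(a*(a/2))" using a t0 at by (intro divide_left_mono mult_left_mono) auto
  also have "\<dots> \<le> (d*a^2/4)/(a*(a/2))" using ta a by (intro divide_right_mono) auto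
  also have "\<dots> = d/2" using a by (simp add: power2_eq_square)
  finally have "t/(a*(a-t)) \<le> d/2" .
  then have 2: "1/(a-t) - 1/a < d" using e2 d by linarith
  show ?thesis using t0 ta 1 2 by blast
qed

definition fs :: "nat set \<Rightarrow> real \<Rightarrow> nat \<Rightarrow> real" where
  "fs S y j = (if j \<in> S then 1 else 0) / y ^ Suc j"

lemma geo_sums: "1 < (y::real) \<Longrightarrow> (\<lambda>j. 1 / y ^ Suc j) sums (1/(y-1))"
proof -
  assume y: "1 < y"
  have "(\<lambda>n. (1/y)^n) sums (1/(1 - 1/y))" using y by (intro geometric_sums) auto
  then have "(\<lambda>n. 1/y * (1/y)^n) sums (1/y * (1/(1 - 1/y)))" by (rule sums_mult)
  moreover have "(\<lambda>n. 1/y * (1/y)^n) = (\<lambda>j. 1 / y ^ Suc j)" by (simp add: power_one_over)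
  moreover have "1/y * (1/(1 - 1/y)) = 1/(y-1)" using y by (simp add: field_simps)
  ultimately show ?thesis by simp
qed

lemma fs_summable: "1 < y \<Longrightarrow> summable (fs S y)"
proof -
  assume y: "1 < y"
  show ?thesis
  proof (rule summable_comparison_test'[OF sums_summable[OF geo_sums[OF y]]])
    fix n :: nat
    show "norm (fs S y n) \<le> 1 / y ^ Suc n" using y unfolding fs_def by (auto simp: divide_right_mono)
  qed
qed

lemma fs_nonneg: "0 < y \<Longrightarrow> 0 \<le> fs S y j"
  unfolding fs_def by simp

lemma cmp:
  assumes y: "1 < y" and yz: "y \<le> z"
  shows "suminf (fs S y) \<le> suminf (fs S z) + 1/(y-1) - 1/(z-1)"
proof -
  have z: "1 < z" using y yz by simp
  have le: "fs S y j + 1 / z ^ Suc j \<le> fs S z j + 1 / y ^ Suc j" for j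
  proof (cases "j \<in> S")
    case True then show ?thesis by (simp add: fs_def)
  next
    case False
    have "1 / z ^ Suc j \<le> 1 / y ^ Suc j" using y yz by (intro divide_left_mono power_mono mult_pos_pos) auto
    then show ?thesis using False by (simp add: fs_def)
  qed
  have "suminf (fs S y) + 1/(z-1) = (\<Sum>j. fs S y j + 1 / z ^ Suc j)"
    using suminf_add[OF fs_summable[OF y] sums_summable[OF geo_sums[OF z]]] sums_unique[OF geo_sums[OF z]] by simp
  also have "\<dots> \<le> (\<Sum>j. fs S z j + 1 / y ^ Suc j)"
    by (intro suminf_le le summable_add fs_summable sums_summable[OF geo_sums] y z)
  also have "\<dots> = suminf (fs S z) + 1/(y-1)"
    using suminf_add[OF fs_summable[OF z] sums_summable[OF geo_sums[OF y]]] sums_unique[OF geo_sums[OF y]] by simp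
  finally show ?thesis by simp
qed


lemma ps_fs: "ps S y N = sum (fs S y) {..<N}"
  by (simp add: ps_def fs_def)

lemma dir1:
  assumes S: "S \<noteq> {}" and lam: "1 < lam" and sum1: "suminf (fs S lam) = 1"
  shows "Sup (Yset S) = lam"
proof -
  note Y = Y_props[OF S]
  have summ: "summable (fs S lam)" by (rule fs_summable[OF lam])
  have le: "\<forall>y\<in>Yset S. y \<le> lam"
  proof
    fix y assume yY: "y \<in> Yset S"
    show "y \<le> lam"
    proof (rule ccontr)
      assume "\<not> y \<le> lam"
      then have yl: "lam < y" by simp
      obtain N where N: "1 \<le> ps S y N" using yY unfolding Yset_def by blast
      have "\<exists>j\<in>{..<N}. j \<in> S"
      proof (rule ccontr)
        assume "\<not> (\<exists>j\<in>{..<N}. j \<in> S)"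
        then have "ps S y N = 0" unfolding ps_def by (intro sum.neutral) auto
        then show False using N by simp
      qed
      then obtain j where j: "j < N" "j \<in> S" by auto
      have "ps S y N < ps S lam N" unfolding ps_fs
      proof (rule sum_strict_mono_ex1)
        show "\<forall>x\<in>{..<N}. fs S y x \<le> fs S lam x"
        proof
          fix x
          have "lam ^ Suc x \<le> y ^ Suc x" using yl lam by (intro power_mono) auto
          then show "fs S y x \<le> fs S lam x" unfolding fs_def using lam by (intro frac_le) auto
        qed
        have "1 / y ^ Suc j < 1 / lam ^ Suc j" using yl lam
          by (intro divide_strict_left_mono power_strict_mono mult_pos_pos) auto
        then show "\<exists>a\<in>{..<N}. fs S y a < fs S lam a" using j unfolding fs_def by auto
      qed simp
      also have "\<dots> \<le> suminf (fs S lam)" unfolding ps_fs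
        using lam by (intro sum_le_suminf summ fs_nonneg) auto
      finally show False using N sum1 by simp
    qed
  qed
  have up: "Sup (Yset S) \<le> lam" using cSup_least[OF Y(4)] le by blast
  have lo: "lam \<le> Sup (Yset S)"
  proof (rule ccontr)
    assume "\<not> lam \<le> Sup (Yset S)"
    then have sl: "Sup (Yset S) < lam" by simp
    define y where "y = (Sup (Yset S) + lam) / 2"
    have y1: "1 \<le> y" "y < lam" "Sup (Yset S) < y" using Y(6) sl unfolding y_def by auto
    obtain s0 where s0: "s0 \<in> S" using S by blast
    define d where "d = fs S y s0 - fs S lam s0"
    have "1 / lam ^ Suc s0 < 1 / y ^ Suc s0" using y1
      by (intro divide_strict_left_mono power_strict_mono mult_pos_pos) auto
    then have d0: "d > 0" unfolding d_def fs_def using s0 by simp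
    have "(\<lambda>N. ps S lam N) \<longlonglongrightarrow> 1" unfolding ps_fs using summable_LIMSEQ[OF summ] sum1 by simp
    then have "eventually (\<lambda>N. 1 - d < ps S lam N) sequentially"
      using d0 by (intro order_tendstoD(1)) auto
    then obtain N0 where N0: "\<And>N. N \<ge> N0 \<Longrightarrow> 1 - d < ps S lam N" unfolding eventually_sequentially by blast
    define N where "N = max N0 (Suc s0)"
    have "d \<le> (\<Sum>j<N. fs S y j - fs S lam j)" unfolding d_def
    proof (rule member_le_sum)
      show "s0 \<in> {..<N}" unfolding N_def by simp
      show "\<And>x. x \<in> {..<N} - {s0} \<Longrightarrow> 0 \<le> fs S y x - fs S lam x"
      proof -
        fix x
        have "y ^ Suc x \<le> lam ^ Suc x" using y1 by (intro power_mono) auto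
        then have "fs S lam x \<le> fs S y x" unfolding fs_def using y1 by (intro frac_le) auto
        then show "0 \<le> fs S y x - fs S lam x" by simp
      qed
    qed simp
    then have "ps S lam N + d \<le> ps S y N" unfolding ps_fs by (simp add: sum_subtractf)
    moreover have "1 - d < ps S lam N" using N0 N_def by simp
    ultimately have "1 \<le> ps S y N" by simp
    then have "y \<in> Yset S" using y1 unfolding Yset_def by auto
    then have "y \<le> Sup (Yset S)" using cSup_upper[OF _ Y(3)] by blast
    then show False using y1 by simp
  qed
  show ?thesis using up lo by simp
qed

lemma dir2:
  assumes S: "S \<noteq> {}" and lam: "1 < lam" and mu: "Sup (Yset S) = lam"
  shows "suminf (fs S lam) = 1"
proof -
  note Y = Y_props[OF S]
  have a0: "0 < lam - 1" using lam by simp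
  have le1: "suminf (fs S lam) \<le> 1"
  proof (rule ccontr)
    assume "\<not> suminf (fs S lam) \<le> 1"
    then have dd: "0 < suminf (fs S lam) - 1" by simp
    obtain t where t: "t > 0" "1/(lam-1) - 1/((lam-1)+t) < suminf (fs S lam) - 1"
      using diff_small[OF a0 dd] by blast
    define z where "z = lam + t"
    have z: "lam < z" "1 \<le> z" using t lam unfolding z_def by auto
    have znot: "z \<notin> Yset S"
    proof
      assume "z \<in> Yset S"
      then have "z \<le> lam" using cSup_upper[OF _ Y(3)] mu by blast
      then show False using z by simp
    qed
    have "\<forall>N. ps S z N < 1" using znot z unfolding Yset_def by (auto simp: not_le)
    then have "suminf (fs S z) \<le> 1"
      using z lam by (intro suminf_le_const fs_summable) (auto simp: ps_fs less_imp_le)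
    moreover have "suminf (fs S lam) \<le> suminf (fs S z) + 1/(lam-1) - 1/(z-1)"
      using cmp[OF lam] z by simp
    moreover have "z - 1 = (lam - 1) + t" unfolding z_def by simp
    ultimately show False using t by simp
  qed
  have ge1: "1 \<le> suminf (fs S lam)"
  proof (rule ccontr)
    assume "\<not> 1 \<le> suminf (fs S lam)"
    then have dd: "0 < 1 - suminf (fs S lam)" by simp
    obtain t where t: "t > 0" "t \<le> (lam - 1)/2" "1/((lam-1)-t) - 1/(lam-1) < 1 - suminf (fs S lam)"
      using diff_small[OF a0 dd] by blast
    define y where "y = lam - t"
    have y: "1 < y" "y < lam" using t lam unfolding y_def by auto
    then obtain y' where "y' \<in> Yset S" "y < y'" using less_cSup_iff[OF Y(4) Y(3)] mu by auto
    then have "y \<in> Yset S" using Y(5) y by simp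
    then obtain N where N: "1 \<le> ps S y N" unfolding Yset_def by blast
    have "ps S y N \<le> suminf (fs S y)" unfolding ps_fs
      using y by (intro sum_le_suminf fs_summable fs_nonneg) auto
    moreover have "suminf (fs S y) \<le> suminf (fs S lam) + 1/(y-1) - 1/(lam-1)"
      using cmp[OF y(1)] y by simp
    moreover have "y - 1 = (lam - 1) - t" unfolding y_def by simp
    ultimately show False using t N by simp
  qed
  show ?thesis using le1 ge1 by simp
qed


theorem proposition4p1:
  fixes lam :: real
  assumes "1 < lam" and "lam < 2"
  shows "bij_betw (\<lambda>a. gap_shift {j. a j})
           {a :: nat \<Rightarrow> bool. (\<Sum>j. (if a j then 1 else 0) / lam ^ Suc j) = 1}
           {X. \<exists>S. S \<noteq> {} \<and> X = gap_shift S \<and> entropy X = log 2 lam}"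
proof -
  have lam: "1 < lam" using assms(1) .
  have fsa: "fs {j. a j} y = (\<lambda>j. (if a j then 1 else 0) / y ^ Suc j)" for a y
    by (auto simp: fs_def)
  show ?thesis
    unfolding bij_betw_def
  proof
    show "inj_on (\<lambda>a. gap_shift {j. a j}) {a :: nat \<Rightarrow> bool. (\<Sum>j. (if a j then 1 else 0) / lam ^ Suc j) = 1}"
    proof (rule inj_onI)
      fix a b :: "nat \<Rightarrow> bool"
      assume "gap_shift {j. a j} = gap_shift {j. b j}"
      then have "{j. a j} = {j. b j}" by (rule gap_shift_inj)
      then show "a = b" by (simp add: set_eq_iff fun_eq_iff)
    qed
    show "(\<lambda>a. gap_shift {j. a j}) ` {a :: nat \<Rightarrow> bool. (\<Sum>j. (if a j then 1 else 0) / lam ^ Suc j) = 1}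
       = {X. \<exists>S. S \<noteq> {} \<and> X = gap_shift S \<and> entropy X = log 2 lam}"
    proof
      show "(\<lambda>a. gap_shift {j. a j}) ` {a :: nat \<Rightarrow> bool. (\<Sum>j. (if a j then 1 else 0) / lam ^ Suc j) = 1}
        \<subseteq> {X. \<exists>S. S \<noteq> {} \<and> X = gap_shift S \<and> entropy X = log 2 lam}"
      proof
        fix X assume "X \<in> (\<lambda>a. gap_shift {j. a j}) ` {a :: nat \<Rightarrow> bool. (\<Sum>j. (if a j then 1 else 0) / lam ^ Suc j) = 1}"
        then obtain a where a: "(\<Sum>j. (if a j then 1 else 0) / lam ^ Suc j) = 1" "X = gap_shift {j. a j}"
          by blast
        define S where "S = {j. a j}"
        have s1: "suminf (fs S lam) = 1" using a(1) fsa S_def by simp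
        have Sne: "S \<noteq> {}"
        proof
          assume "S = {}"
          then have "fs S lam = (\<lambda>_. 0)" by (auto simp: fs_def)
          then show False using s1 by simp
        qed
        have XS: "X = gap_shift S" using a(2) S_def by simp
        have "entropy X = entropy (gap_shift S)" using XS by simp
        also have "\<dots> = log 2 (Sup (Yset S))" by (rule entropy_eq[OF Sne])
        also have "\<dots> = log 2 lam" using dir1[OF Sne lam s1] by simp
        finally have "entropy X = log 2 lam" .
        then show "X \<in> {X. \<exists>S. S \<noteq> {} \<and> X = gap_shift S \<and> entropy X = log 2 lam}"
          unfolding mem_Collect_eq using Sne XS by (intro exI[of _ S]) simp
      qed
      show "{X. \<exists>S. S \<noteq> {} \<and> X = gap_shift S \<and> entropy X = log 2 lam}
        \<subseteq> (\<lambda>a. gap_shift {j. a j}) ` {a :: nat \<Rightarrow> bool. (\<Sum>j. (if a j then 1 else 0) / lam ^ Suc j) = 1}"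
      proof
        fix X assume "X \<in> {X. \<exists>S. S \<noteq> {} \<and> X = gap_shift S \<and> entropy X = log 2 lam}"
        then obtain S where S: "S \<noteq> {}" "X = gap_shift S" "entropy X = log 2 lam" by blast
        have "log 2 (Sup (Yset S)) = entropy X" using S(2) entropy_eq[OF S(1)] by simp
        then have l: "log 2 (Sup (Yset S)) = log 2 lam" using S(3) by simp
        have p: "0 < Sup (Yset S)" using Y_props(6)[OF S(1)] by simp
        have mu: "Sup (Yset S) = lam"
          by (rule inj_onD[OF log_inj[of 2] l]) (use p lam in auto)
        have s1: "suminf (fs S lam) = 1" by (rule dir2[OF S(1) lam mu])
        define a where "a j = (j \<in> S)" for j
        have Sa: "{j. a j} = S" unfolding a_def by simp
        have "(\<Sum>j. (if a j then 1 else 0) / lam ^ Suc j) = 1" using s1 fsa[of a lam] Sa by simp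
        then show "X \<in> (\<lambda>a. gap_shift {j. a j}) ` {a :: nat \<Rightarrow> bool. (\<Sum>j. (if a j then 1 else 0) / lam ^ Suc j) = 1}"
          using S(2) Sa by force
      qed
    qed
  qed
qed

end
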